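(* Let $G$ be a connected graph with a fixed vertex $w$. Take a cycle $C_c$ of length $c\in\{5,6\}$, vertex-disjoint from $G$, and identify one vertex of the cycle with $w$. Let $v_2$ be a vertex of $C_c$ at distance $2$ from $w$ on the cycle, and let $v_1$ be the unique common neighbour of $w$ and $v_2$ on $C_c$. Attach a path of length $2$ (with two new vertices) by identifying one of its endpoints with $v_2$, and denote the resulting graph by $G^*$. Then $\delta_{G^*}(w) = t_{G^*}(w) - t_{G^*-v_1}(w) \leq -2$.
   Context: All graphs are finite, simple, undirected. For a graph $H$ and vertex $x$, the transmission is $t_H(x)=\sum_{y\in V(H)}\mathrm{dist}_H(x,y)$; $H-v$ denotes $H$ with vertex $v$ and its incident edges deleted. The quantity $\delta_{G^*}(w)$ is taken with respect to the vertex $v_1$. *)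

theory Defs
  imports Main
begin

definition simple_graph :: "'a set \<Rightarrow> ('a \<times> 'a) set \<Rightarrow> bool" where
  "simple_graph V E \<longleftrightarrow> finite V \<and> E \<subseteq> V \<times> V \<and> sym E \<and> (\<forall>x. (x, x) \<notin> E)"

definition is_walk :: "'a set \<Rightarrow> ('a \<times> 'a) set \<Rightarrow> 'a list \<Rightarrow> bool" where
  "is_walk V E xs \<longleftrightarrow> xs \<noteq> [] \<and> set xs \<subseteq> V \<and>
     (\<forall>i. Suc i < length xs \<longrightarrow> (xs ! i, xs ! Suc i) \<in> E)"

definition graph_connected :: "'a set \<Rightarrow> ('a \<times> 'a) set \<Rightarrow> bool" where
  "graph_connected V E \<longleftrightarrow>
     (\<forall>x\<in>V. \<forall>y\<in>V. \<exists>xs. is_walk V E xs \<and> hd xs = x \<and> last xs = y)"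

definition gdist :: "'a set \<Rightarrow> ('a \<times> 'a) set \<Rightarrow> 'a \<Rightarrow> 'a \<Rightarrow> nat" where
  "gdist V E x y = (LEAST n. \<exists>xs. is_walk V E xs \<and> hd xs = x \<and> last xs = y \<and> length xs = Suc n)"

definition transmission :: "'a set \<Rightarrow> ('a \<times> 'a) set \<Rightarrow> 'a \<Rightarrow> nat" where
  "transmission V E x = (\<Sum>y\<in>V. gdist V E x y)"

definition del_edges :: "('a \<times> 'a) set \<Rightarrow> 'a \<Rightarrow> ('a \<times> 'a) set" where
  "del_edges E v = {(a, b). (a, b) \<in> E \<and> a \<noteq> v \<and> b \<noteq> v}"

definition symcl :: "('a \<times> 'a) set \<Rightarrow> ('a \<times> 'a) set" where
  "symcl R = R \<union> R\<inverse>"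

definition cycle_edges :: "'a list \<Rightarrow> ('a \<times> 'a) set" where
  "cycle_edges cyc = symcl {(cyc ! i, cyc ! (Suc i mod length cyc)) | i. i < length cyc}"

end

theory Submission imports Defs begin
lemma walk_single[simp]: "is_walk V E [x] \<longleftrightarrow> x \<in> V"
  unfolding is_walk_def by auto

lemma walk_cons2[simp]: "is_walk V E (x#y#xs) \<longleftrightarrow> x \<in> V \<and> (x,y) \<in> E \<and> is_walk V E (y#xs)"
proof
  assume h: "is_walk V E (x#y#xs)"
  then have "\<forall>i. Suc i < length (y#xs) \<longrightarrow> ((y#xs) ! i, (y#xs) ! Suc i) \<in> E"
    unfolding is_walk_def
    proof (intro allI impI)
      fix i assume "Suc i < length (y#xs)"
      then have "Suc (Suc i) < length (x#y#xs)" by simp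
      then have "((x#y#xs) ! Suc i, (x#y#xs) ! Suc (Suc i)) \<in> E" using h unfolding is_walk_def by blast
      then show "((y#xs) ! i, (y#xs) ! Suc i) \<in> E" by simp
    qed
  with h show "x \<in> V \<and> (x,y) \<in> E \<and> is_walk V E (y#xs)"
    unfolding is_walk_def by auto
next
  assume h: "x \<in> V \<and> (x,y) \<in> E \<and> is_walk V E (y#xs)"
  show "is_walk V E (x#y#xs)" unfolding is_walk_def
  proof (intro conjI allI impI)
    fix i assume "Suc i < length (x#y#xs)"
    then show "((x#y#xs) ! i, (x#y#xs) ! Suc i) \<in> E"
      using h unfolding is_walk_def by (cases i) auto
  qed (use h in \<open>auto simp: is_walk_def\<close>)
qed

lemma walk_mono: "is_walk V E xs \<Longrightarrow> V \<subseteq> V' \<Longrightarrow> E \<subseteq> E' \<Longrightarrow> is_walk V' E' xs"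
  unfolding is_walk_def by blast

lemma walk_pot: "is_walk V E xs \<Longrightarrow> (\<forall>p q. (p,q)\<in>E \<longrightarrow> f q \<le> f p + 1)
   \<Longrightarrow> f (last xs) \<le> f (hd xs) + (length xs - 1)"
proof (induction xs rule: induct_list012)
  case 1 then show ?case by (simp add: is_walk_def)
next
  case (2 x) then show ?case by simp
next
  case (3 x y zs)
  then have "f (last (y#zs)) \<le> f y + (length (y#zs) - 1)" by simp
  moreover have "f y \<le> f x + 1" using 3 by simp
  ultimately show ?case by simp
qed

lemma walk_len: "is_walk V E xs \<Longrightarrow> length xs = Suc (length xs - 1)"
  unfolding is_walk_def by (cases xs) auto

lemma gdist_le: "is_walk V E xs \<Longrightarrow> hd xs = x \<Longrightarrow> last xs = y \<Longrightarrow> gdist V E x y \<le> length xs - 1"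
  unfolding gdist_def
proof (rule Least_le)
  assume "is_walk V E xs" "hd xs = x" "last xs = y"
  then show "\<exists>ys. is_walk V E ys \<and> hd ys = x \<and> last ys = y \<and> length ys = Suc (length xs - 1)"
    using walk_len by blast
qed

lemma gdist_ex: assumes "is_walk V E xs" "hd xs = x" "last xs = y"
  shows "\<exists>ys. is_walk V E ys \<and> hd ys = x \<and> last ys = y \<and> length ys = Suc (gdist V E x y)"
  unfolding gdist_def
proof (rule LeastI_ex)
  show "\<exists>n ys. is_walk V E ys \<and> hd ys = x \<and> last ys = y \<and> length ys = Suc n"
    using assms walk_len by blast
qed

lemma gdist_ge: assumes "is_walk V E xs" "hd xs = x" "last xs = y" "\<forall>p q. (p,q)\<in>E \<longrightarrow> f q \<le> f p + 1"
  shows "f y \<le> f x + gdist V E x y"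
proof -
  obtain ys where ys: "is_walk V E ys" "hd ys = x" "last ys = y" "length ys = Suc (gdist V E x y)"
    using gdist_ex[OF assms(1-3)] by blast
  have "f (last ys) \<le> f (hd ys) + (length ys - 1)" using walk_pot[OF ys(1) assms(4)] .
  then show ?thesis using ys by simp
qed

lemma gdist_mono: assumes "is_walk V' E' xs" "hd xs = x" "last xs = y" "V' \<subseteq> V" "E' \<subseteq> E"
  shows "gdist V E x y \<le> gdist V' E' x y"
proof -
  obtain ys where ys: "is_walk V' E' ys" "hd ys = x" "last ys = y" "length ys = Suc (gdist V' E' x y)"
    using gdist_ex[OF assms(1-3)] by blast
  have "is_walk V E ys" using walk_mono[OF ys(1) assms(4,5)] .
  from gdist_le[OF this ys(2,3)] show ?thesis using ys(4) by simp
qed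

lemma case5:
  assumes sg: "simple_graph V E" and conn: "graph_connected V E" and wV: "w \<in> V"
    and dist: "distinct [w,a,b,c,d,x1,x2]" and disj: "{a,b,c,d,x1,x2} \<inter> V = {}"
  defines "Vs \<equiv> V \<union> {w,a,b,c,d} \<union> {x1,x2}"
    and "Es \<equiv> E \<union> symcl {(w,a),(a,b),(b,c),(c,d),(d,w)} \<union> symcl {(b,x1),(x1,x2)}"
  shows "int (transmission Vs Es w) - int (transmission (Vs - {a}) (del_edges Es a) w) \<le> -2"
proof -
  let ?D = "del_edges Es a"
  have EV: "E \<subseteq> V \<times> V" and fin: "finite V" using sg by (auto simp: simple_graph_def)
  have nV: "a \<notin> V" "b \<notin> V" "c \<notin> V" "d \<notin> V" "x1 \<notin> V" "x2 \<notin> V" using disj by auto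
  have EsD: "E \<subseteq> ?D" using EV nV by (auto simp: del_edges_def Es_def)
  have EEs: "E \<subseteq> Es" by (auto simp: Es_def)
  have VVs: "V \<subseteq> Vs - {a}" using nV by (auto simp: Vs_def)
  have Vs1: "Vs = V \<union> {a,b,c,d,x1,x2}" using wV by (auto simp: Vs_def)
  have Vs2: "Vs - {a} = V \<union> {b,c,d,x1,x2}" using nV dist wV by (auto simp: Vs_def)
  have inV: "\<forall>y\<in>V. gdist Vs Es w y \<le> gdist (Vs - {a}) ?D w y"
  proof
    fix y assume "y \<in> V"
    then obtain xs where xs: "is_walk V E xs" "hd xs = w" "last xs = y"
      using conn wV unfolding graph_connected_def by blast
    have "is_walk (Vs - {a}) ?D xs" using walk_mono[OF xs(1) VVs EsD] .
    then show "gdist Vs Es w y \<le> gdist (Vs - {a}) ?D w y"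
      by (rule gdist_mono[OF _ xs(2,3)]) (auto simp: del_edges_def)
  qed
  have sV: "(\<Sum>y\<in>V. gdist Vs Es w y) \<le> (\<Sum>y\<in>V. gdist (Vs - {a}) ?D w y)"
    using inV by (simp add: sum_mono)
  have ewa: "(w,a) \<in> Es" "(a,b) \<in> Es" "(b,c) \<in> Es" "(c,d) \<in> Es" "(d,w) \<in> Es"
      "(b,x1) \<in> Es" "(x1,x2) \<in> Es" "(w,d) \<in> Es" "(d,c) \<in> Es" "(c,b) \<in> Es"
    by (auto simp: Es_def symcl_def)
  have inVs: "w \<in> Vs" "a \<in> Vs" "b \<in> Vs" "c \<in> Vs" "d \<in> Vs" "x1 \<in> Vs" "x2 \<in> Vs"
    by (auto simp: Vs_def)
  have u1: "gdist Vs Es w a \<le> 1" using gdist_le[of Vs Es "[w,a]" w a] ewa inVs by simp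
  have u2: "gdist Vs Es w b \<le> 2" using gdist_le[of Vs Es "[w,a,b]" w b] ewa inVs by simp
  have u3: "gdist Vs Es w c \<le> 2" using gdist_le[of Vs Es "[w,d,c]" w c] ewa inVs by simp
  have u4: "gdist Vs Es w d \<le> 1" using gdist_le[of Vs Es "[w,d]" w d] ewa inVs by simp
  have u5: "gdist Vs Es w x1 \<le> 3" using gdist_le[of Vs Es "[w,a,b,x1]" w x1] ewa inVs by simp
  have u6: "gdist Vs Es w x2 \<le> 4" using gdist_le[of Vs Es "[w,a,b,x1,x2]" w x2] ewa inVs by simp
  define f where "f y = (if y = d then 1 else if y = c then 2 else if y = b then 3
      else if y = x1 then 4 else if y = x2 then (5::nat) else 0)" for y
  have fw: "f w = 0" using dist by (simp add: f_def)
  have fv: "f b = 3" "f c = 2" "f d = 1" "f x1 = 4" "f x2 = 5" using dist by (auto simp: f_def)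
  have pot: "\<forall>p q. (p,q) \<in> ?D \<longrightarrow> f q \<le> f p + 1"
  proof (intro allI impI)
    fix p q assume pq: "(p,q) \<in> ?D"
    show "f q \<le> f p + 1"
    proof (cases "(p,q) \<in> E")
      case True
      then have "p \<in> V" "q \<in> V" using EV by auto
      then show ?thesis using nV by (auto simp: f_def)
    next
      case False
      then show ?thesis using pq dist by (auto simp: del_edges_def Es_def symcl_def f_def)
    qed
  qed
  have inD: "(w,d) \<in> ?D" "(d,c) \<in> ?D" "(c,b) \<in> ?D" "(b,x1) \<in> ?D" "(x1,x2) \<in> ?D"
    using ewa dist by (auto simp: del_edges_def)
  have inVs2: "w \<in> Vs - {a}" "b \<in> Vs - {a}" "c \<in> Vs - {a}" "d \<in> Vs - {a}"
     "x1 \<in> Vs - {a}" "x2 \<in> Vs - {a}" using inVs dist by auto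
  have l2: "3 \<le> gdist (Vs - {a}) ?D w b"
    using gdist_ge[of "Vs - {a}" ?D "[w,d,c,b]" w b f] inD inVs2 pot fw fv by simp
  have l3: "2 \<le> gdist (Vs - {a}) ?D w c"
    using gdist_ge[of "Vs - {a}" ?D "[w,d,c]" w c f] inD inVs2 pot fw fv by simp
  have l4: "1 \<le> gdist (Vs - {a}) ?D w d"
    using gdist_ge[of "Vs - {a}" ?D "[w,d]" w d f] inD inVs2 pot fw fv by simp
  have l5: "4 \<le> gdist (Vs - {a}) ?D w x1"
    using gdist_ge[of "Vs - {a}" ?D "[w,d,c,b,x1]" w x1 f] inD inVs2 pot fw fv by simp
  have l6: "5 \<le> gdist (Vs - {a}) ?D w x2"
    using gdist_ge[of "Vs - {a}" ?D "[w,d,c,b,x1,x2]" w x2 f] inD inVs2 pot fw fv by simp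
  have T1: "transmission Vs Es w = (\<Sum>y\<in>V. gdist Vs Es w y) + (gdist Vs Es w a + gdist Vs Es w b
     + gdist Vs Es w c + gdist Vs Es w d + gdist Vs Es w x1 + gdist Vs Es w x2)"
    unfolding transmission_def Vs1 using fin nV dist
    by (subst sum.union_disjoint) (auto simp: add.assoc)
  have T2: "transmission (Vs - {a}) ?D w = (\<Sum>y\<in>V. gdist (Vs - {a}) ?D w y) + (gdist (Vs - {a}) ?D w b
     + gdist (Vs - {a}) ?D w c + gdist (Vs - {a}) ?D w d + gdist (Vs - {a}) ?D w x1 + gdist (Vs - {a}) ?D w x2)"
    unfolding transmission_def Vs2 using fin nV dist
    by (subst sum.union_disjoint) (auto simp: add.assoc)
  show ?thesis unfolding T1 T2 using sV u1 u2 u3 u4 u5 u6 l2 l3 l4 l5 l6 by linarith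
qed
lemma case6:
  assumes sg: "simple_graph V E" and conn: "graph_connected V E" and wV: "w \<in> V"
    and dist: "distinct [w,a,b,c,d,e,x1,x2]" and disj: "{a,b,c,d,e,x1,x2} \<inter> V = {}"
  defines "Vs \<equiv> V \<union> {w,a,b,c,d,e} \<union> {x1,x2}"
    and "Es \<equiv> E \<union> symcl {(w,a),(a,b),(b,c),(c,d),(d,e),(e,w)} \<union> symcl {(b,x1),(x1,x2)}"
  shows "int (transmission Vs Es w) - int (transmission (Vs - {a}) (del_edges Es a) w) \<le> -2"
proof -
  let ?D = "del_edges Es a"
  have EV: "E \<subseteq> V \<times> V" and fin: "finite V" using sg by (auto simp: simple_graph_def)
  have nV: "a \<notin> V" "b \<notin> V" "c \<notin> V" "d \<notin> V" "e \<notin> V" "x1 \<notin> V" "x2 \<notin> V" using disj by auto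
  have EsD: "E \<subseteq> ?D" using EV nV by (auto simp: del_edges_def Es_def)
  have VVs: "V \<subseteq> Vs - {a}" using nV by (auto simp: Vs_def)
  have Vs1: "Vs = V \<union> {a,b,c,d,e,x1,x2}" using wV by (auto simp: Vs_def)
  have Vs2: "Vs - {a} = V \<union> {b,c,d,e,x1,x2}" using nV dist wV by (auto simp: Vs_def)
  have inV: "\<forall>y\<in>V. gdist Vs Es w y \<le> gdist (Vs - {a}) ?D w y"
  proof
    fix y assume "y \<in> V"
    then obtain xs where xs: "is_walk V E xs" "hd xs = w" "last xs = y"
      using conn wV unfolding graph_connected_def by blast
    have "is_walk (Vs - {a}) ?D xs" using walk_mono[OF xs(1) VVs EsD] .
    then show "gdist Vs Es w y \<le> gdist (Vs - {a}) ?D w y"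
      by (rule gdist_mono[OF _ xs(2,3)]) (auto simp: del_edges_def)
  qed
  have sV: "(\<Sum>y\<in>V. gdist Vs Es w y) \<le> (\<Sum>y\<in>V. gdist (Vs - {a}) ?D w y)"
    using inV by (simp add: sum_mono)
  have ewa: "(w,a) \<in> Es" "(a,b) \<in> Es" "(b,c) \<in> Es" "(c,d) \<in> Es" "(d,e) \<in> Es" "(e,w) \<in> Es"
      "(b,x1) \<in> Es" "(x1,x2) \<in> Es" "(w,e) \<in> Es" "(e,d) \<in> Es" "(d,c) \<in> Es" "(c,b) \<in> Es"
    by (auto simp: Es_def symcl_def)
  have inVs: "w \<in> Vs" "a \<in> Vs" "b \<in> Vs" "c \<in> Vs" "d \<in> Vs" "e \<in> Vs" "x1 \<in> Vs" "x2 \<in> Vs"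
    by (auto simp: Vs_def)
  have u1: "gdist Vs Es w a \<le> 1" using gdist_le[of Vs Es "[w,a]" w a] ewa inVs by simp
  have u2: "gdist Vs Es w b \<le> 2" using gdist_le[of Vs Es "[w,a,b]" w b] ewa inVs by simp
  have u3: "gdist Vs Es w c \<le> 3" using gdist_le[of Vs Es "[w,a,b,c]" w c] ewa inVs by simp
  have u4: "gdist Vs Es w d \<le> 2" using gdist_le[of Vs Es "[w,e,d]" w d] ewa inVs by simp
  have u4': "gdist Vs Es w e \<le> 1" using gdist_le[of Vs Es "[w,e]" w e] ewa inVs by simp
  have u5: "gdist Vs Es w x1 \<le> 3" using gdist_le[of Vs Es "[w,a,b,x1]" w x1] ewa inVs by simp
  have u6: "gdist Vs Es w x2 \<le> 4" using gdist_le[of Vs Es "[w,a,b,x1,x2]" w x2] ewa inVs by simp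
  define f where "f y = (if y = e then 1 else if y = d then 2 else if y = c then 3 else if y = b then 4
      else if y = x1 then 5 else if y = x2 then (6::nat) else 0)" for y
  have fw: "f w = 0" using dist by (simp add: f_def)
  have fv: "f b = 4" "f c = 3" "f d = 2" "f e = 1" "f x1 = 5" "f x2 = 6" using dist by (auto simp: f_def)
  have pot: "\<forall>p q. (p,q) \<in> ?D \<longrightarrow> f q \<le> f p + 1"
  proof (intro allI impI)
    fix p q assume pq: "(p,q) \<in> ?D"
    show "f q \<le> f p + 1"
    proof (cases "(p,q) \<in> E")
      case True
      then have "p \<in> V" "q \<in> V" using EV by auto
      then show ?thesis using nV by (auto simp: f_def)
    next
      case False
      then show ?thesis using pq dist by (auto simp: del_edges_def Es_def symcl_def f_def)
    qed
  qed
  have inD: "(w,e) \<in> ?D" "(e,d) \<in> ?D" "(d,c) \<in> ?D" "(c,b) \<in> ?D" "(b,x1) \<in> ?D" "(x1,x2) \<in> ?D"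
    using ewa dist by (auto simp: del_edges_def)
  have inVs2: "w \<in> Vs - {a}" "b \<in> Vs - {a}" "c \<in> Vs - {a}" "d \<in> Vs - {a}" "e \<in> Vs - {a}"
     "x1 \<in> Vs - {a}" "x2 \<in> Vs - {a}" using inVs dist by auto
  have l2: "4 \<le> gdist (Vs - {a}) ?D w b"
    using gdist_ge[of "Vs - {a}" ?D "[w,e,d,c,b]" w b f] inD inVs2 pot fw fv by simp
  have l3: "3 \<le> gdist (Vs - {a}) ?D w c"
    using gdist_ge[of "Vs - {a}" ?D "[w,e,d,c]" w c f] inD inVs2 pot fw fv by simp
  have l4: "2 \<le> gdist (Vs - {a}) ?D w d"
    using gdist_ge[of "Vs - {a}" ?D "[w,e,d]" w d f] inD inVs2 pot fw fv by simp
  have l4': "1 \<le> gdist (Vs - {a}) ?D w e"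
    using gdist_ge[of "Vs - {a}" ?D "[w,e]" w e f] inD inVs2 pot fw fv by simp
  have l5: "5 \<le> gdist (Vs - {a}) ?D w x1"
    using gdist_ge[of "Vs - {a}" ?D "[w,e,d,c,b,x1]" w x1 f] inD inVs2 pot fw fv by simp
  have l6: "6 \<le> gdist (Vs - {a}) ?D w x2"
    using gdist_ge[of "Vs - {a}" ?D "[w,e,d,c,b,x1,x2]" w x2 f] inD inVs2 pot fw fv by simp
  have T1: "transmission Vs Es w = (\<Sum>y\<in>V. gdist Vs Es w y) + (gdist Vs Es w a + gdist Vs Es w b
     + gdist Vs Es w c + gdist Vs Es w d + gdist Vs Es w e + gdist Vs Es w x1 + gdist Vs Es w x2)"
    unfolding transmission_def Vs1 using fin nV dist
    by (subst sum.union_disjoint) (auto simp: add.assoc)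
  have T2: "transmission (Vs - {a}) ?D w = (\<Sum>y\<in>V. gdist (Vs - {a}) ?D w y) + (gdist (Vs - {a}) ?D w b
     + gdist (Vs - {a}) ?D w c + gdist (Vs - {a}) ?D w d + gdist (Vs - {a}) ?D w e
     + gdist (Vs - {a}) ?D w x1 + gdist (Vs - {a}) ?D w x2)"
    unfolding transmission_def Vs2 using fin nV dist
    by (subst sum.union_disjoint) (auto simp: add.assoc)
  show ?thesis unfolding T1 T2 using sV u1 u2 u3 u4 u4' u5 u6 l2 l3 l4 l4' l5 l6 by linarith
qed

lemma setcompr_img: "{g i | i. i < n} = g ` {..<(n::nat)}" by auto

lemma lt5: "{..<(5::nat)} = {0,1,2,3,4}" by (auto simp: numeral_eq_Suc lessThan_Suc)
lemma lt6: "{..<(6::nat)} = {0,1,2,3,4,5}" by (auto simp: numeral_eq_Suc lessThan_Suc)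

theorem lemma3:
  fixes V :: "'a set" and E :: "('a \<times> 'a) set" and w :: 'a
    and cyc :: "'a list" and x1 x2 :: 'a and c :: nat
  assumes "simple_graph V E" and "graph_connected V E" and "w \<in> V"
    and "c \<in> {5, 6}" and "length cyc = c" and "distinct cyc"
    and "cyc ! 0 = w" and "set cyc \<inter> V = {w}"
    and "x1 \<notin> V \<union> set cyc" and "x2 \<notin> V \<union> set cyc" and "x1 \<noteq> x2"
  defines "Vs \<equiv> V \<union> set cyc \<union> {x1, x2}"
    and "Es \<equiv> E \<union> cycle_edges cyc \<union> symcl {(cyc ! 2, x1), (x1, x2)}"
  shows "int (transmission Vs Es w)
           - int (transmission (Vs - {cyc ! 1}) (del_edges Es (cyc ! 1)) w) \<le> -2"
proof (cases "c = 5")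
  case True
  then obtain a b cc d where cyc: "cyc = [w,a,b,cc,d]" using assms(5,7)
    by (cases cyc; simp; rename_tac l; case_tac l; simp; rename_tac l; case_tac l; simp;
        rename_tac l; case_tac l; simp; rename_tac l; case_tac l; simp; rename_tac l; case_tac l; simp)
  have ce: "cycle_edges [w,a,b,cc,d] = symcl {(w,a),(a,b),(b,cc),(cc,d),(d,w)}"
    unfolding cycle_edges_def setcompr_img by (simp add: lessThan_Suc insert_commute)
  have dist: "distinct [w,a,b,cc,d,x1,x2]" using assms(6,9,10,11) cyc by auto
  have disj: "{a,b,cc,d,x1,x2} \<inter> V = {}"
  proof -
    have "{w,a,b,cc,d} \<inter> V = {w}" using assms(8) cyc by simp
    moreover have "a \<noteq> w" "b \<noteq> w" "cc \<noteq> w" "d \<noteq> w" using dist by auto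
    ultimately have "a \<notin> V" "b \<notin> V" "cc \<notin> V" "d \<notin> V" by blast+
    then show ?thesis using assms(9,10) by blast
  qed
  show ?thesis using case5[OF assms(1,2,3) dist disj] unfolding Vs_def Es_def cyc ce
    by (simp add: insert_commute)
next
  case False
  then have "c = 6" using assms(4) by simp
  then obtain a b cc d e where cyc: "cyc = [w,a,b,cc,d,e]" using assms(5,7)
    by (cases cyc; simp; rename_tac l; case_tac l; simp; rename_tac l; case_tac l; simp;
        rename_tac l; case_tac l; simp; rename_tac l; case_tac l; simp; rename_tac l; case_tac l; simp;
        rename_tac l; case_tac l; simp)
  have ce: "cycle_edges [w,a,b,cc,d,e] = symcl {(w,a),(a,b),(b,cc),(cc,d),(d,e),(e,w)}"
    unfolding cycle_edges_def setcompr_img by (simp add: lessThan_Suc insert_commute)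
  have dist: "distinct [w,a,b,cc,d,e,x1,x2]" using assms(6,9,10,11) cyc by auto
  have disj: "{a,b,cc,d,e,x1,x2} \<inter> V = {}"
  proof -
    have "{w,a,b,cc,d,e} \<inter> V = {w}" using assms(8) cyc by simp
    moreover have "a \<noteq> w" "b \<noteq> w" "cc \<noteq> w" "d \<noteq> w" "e \<noteq> w" using dist by auto
    ultimately have "a \<notin> V" "b \<notin> V" "cc \<notin> V" "d \<notin> V" "e \<notin> V" by blast+
    then show ?thesis using assms(9,10) by blast
  qed
  show ?thesis using case6[OF assms(1,2,3) dist disj] unfolding Vs_def Es_def cyc ce
    by (simp add: insert_commute)
qed

end
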